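(* Let $u$ be a nondecreasing packed word and let $v,v'$ be packed words with $\mathrm{WC}(v')=\mathrm{WC}(v)$. Then $\zeta(\mathbf M_u\star_q\mathbf M_v)=\zeta(\mathbf M_u\star_q\mathbf M_{v'})$.
   Context: Over $\mathbb K(q)$ ($\mathrm{char}\,\mathbb K=0$): packed words are words with letter set $\{1,\dots,m\}$; $\mathrm{pack}$ replaces the $t$-th smallest letter by $t$. For a packed word $w$ of length $N$: $\mathrm{WC}(w)$ is the composition of $N$ whose descent set (set of partial sums other than $N$) is the set of positions $p<N$ with $w_p$ not occurring in $w_{p+1}\cdots w_N$; $\mathrm{sinv}(w)=\#\{i<j:w_i>w_j,\ w_j\text{ not occurring in }w_{j+1}\cdots w_N\}$. $\mathbf{WQSym}$ has basis $\mathbf M_u$ with $\mathbf M_{u'}\mathbf M_{u''}=\sum\mathbf M_z$ over packed $z=x\cdot y$ with $\mathrm{pack}(x)=u'$, $\mathrm{pack}(y)=u''$; $\mathbf M_{u'}\star_q\mathbf M_{u''}=\sum q^{\mathrm{sinv}(z)-\mathrm{sinv}(u')-\mathrm{sinv}(u'')}\mathbf M_z$ over the same $z$. $\zeta$ is the quotient map from $\mathbf{WQSym}$ to its quotient by the span of all $\mathbf M_z-\mathbf M_{z'}$ with $\mathrm{WC}(z)=\mathrm{WC}(z')$. *)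

theory Defs
  imports "HOL-Computational_Algebra.Polynomial" "HOL-Computational_Algebra.Fraction_Field"
begin

(* Words are lists of natural numbers; positions are 0-indexed in the code. *)

definition packed :: "nat list \<Rightarrow> bool" where
  "packed w \<longleftrightarrow> set w = {1..card (set w)}"

definition pack :: "nat list \<Rightarrow> nat list" where
  "pack w = map (\<lambda>a. card {b \<in> set w. b \<le> a}) w"

(* descent set of WC(w), with 1-indexed positions p < N *)
definition wc_des :: "nat list \<Rightarrow> nat set" where
  "wc_des w = {p. 1 \<le> p \<and> p < length w \<and> w ! (p - 1) \<notin> set (drop p w)}"

(* the composition of N with prescribed descent set D \<subseteq> {1..N-1} *)
definition comp_of_set :: "nat \<Rightarrow> nat set \<Rightarrow> nat list" where
  "comp_of_set N D =
     (if N = 0 then []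
      else (let ps = sorted_list_of_set D @ [N] in map2 (-) ps (0 # butlast ps)))"

definition WC :: "nat list \<Rightarrow> nat list" where
  "WC w = comp_of_set (length w) (wc_des w)"

definition sinv :: "nat list \<Rightarrow> nat" where
  "sinv w = card {(i, j). i < j \<and> j < length w \<and> w ! i > w ! j \<and>
                           w ! j \<notin> set (drop (j + 1) w)}"

type_synonym 'k ratfun = "'k poly fract"

definition qvar :: "'k::field_char_0 ratfun" where
  "qvar = Fract [:0, 1:] 1"

(* elements of WQSym: finitely supported coefficient functions on packed words *)
type_synonym 'k wqsym = "nat list \<Rightarrow> 'k ratfun"

definition Mb :: "nat list \<Rightarrow> 'k::field_char_0 wqsym" where
  "Mb u = (\<lambda>z. if z = u then 1 else 0)"

definition shuffle_set :: "nat list \<Rightarrow> nat list \<Rightarrow> nat list set" where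
  "shuffle_set u' u'' = {z. packed z \<and> length z = length u' + length u'' \<and>
      pack (take (length u') z) = u' \<and> pack (drop (length u') z) = u''}"

definition star_q :: "nat list \<Rightarrow> nat list \<Rightarrow> 'k::field_char_0 wqsym" where
  "star_q u' u'' = (\<lambda>z. if z \<in> shuffle_set u' u''
      then qvar powi (int (sinv z) - int (sinv u') - int (sinv u'')) else 0)"

(* zeta: the quotient by span{M_z - M_z' : WC z = WC z'} is identified with the
   free module on compositions; zeta f sends a composition c to the sum of the
   coefficients of f on packed words z with WC z = c *)
definition zeta :: "'k::field_char_0 wqsym \<Rightarrow> (nat list \<Rightarrow> 'k ratfun)" where
  "zeta f = (\<lambda>c. \<Sum>z\<in>{z. packed z \<and> WC z = c}. f z)"

end

theory Submission
  imports Defs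
begin


lemma in_set_drop_iff: "a \<in> set (drop k w) \<longleftrightarrow> (\<exists>i. k \<le> i \<and> i < length w \<and> w ! i = a)"
  apply (auto simp: in_set_conv_nth)
   apply (rule_tac x="k+i" in exI, simp)
  apply (rule_tac x="i-k" in exI, simp)
  done

definition lastpos :: "nat list \<Rightarrow> nat set" where
  "lastpos w = {j. j < length w \<and> w ! j \<notin> set (drop (Suc j) w)}"

lemma lastpos_bij: "bij_betw (\<lambda>j. w ! j) (lastpos w) (set w)"
proof -
  have inj: "inj_on (\<lambda>j. w ! j) (lastpos w)"
  proof (rule inj_onI)
    fix i j assume i: "i \<in> lastpos w" and j: "j \<in> lastpos w" and e: "w ! i = w ! j"
    show "i = j"
    proof (rule ccontr)
      assume "i \<noteq> j"
      then consider "i < j" | "j < i" by linarith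
      then show False
      proof cases
        case 1 then show False using i j e by (auto simp: lastpos_def in_set_drop_iff)
      next
        case 2 then show False using i j e by (force simp: lastpos_def in_set_drop_iff)
      qed
    qed
  qed
  have "set w \<subseteq> (\<lambda>j. w ! j) ` lastpos w"
  proof
    fix a assume a: "a \<in> set w"
    define J where "J = {j. j < length w \<and> w ! j = a}"
    have fin: "finite J" unfolding J_def by auto
    have ne: "J \<noteq> {}" using a unfolding J_def by (auto simp: in_set_conv_nth)
    define m where "m = Max J"
    have mJ: "m \<in> J" using fin ne m_def Max_in by blast
    have "m \<in> lastpos w"
    proof -
      { fix i assume "Suc m \<le> i" "i < length w" "w ! i = a"
        then have "i \<in> J" unfolding J_def by auto
        then have "i \<le> m" using fin m_def by auto
        with \<open>Suc m \<le> i\<close> have False by simp }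
      then show ?thesis using mJ unfolding lastpos_def J_def in_set_drop_iff by auto
    qed
    then show "a \<in> (\<lambda>j. w ! j) ` lastpos w" using mJ unfolding J_def by force
  qed
  moreover have "(\<lambda>j. w ! j) ` lastpos w \<subseteq> set w" by (auto simp: lastpos_def)
  ultimately show ?thesis using inj by (auto simp: bij_betw_def)
qed

lemma card_lastpos: "card (lastpos w) = card (set w)"
  using bij_betw_same_card[OF lastpos_bij] .

lemma mem_drop_map:
  assumes "inj_on f (set w)" "j < length w"
  shows "(f (w!j) \<in> set (drop k (map f w))) = (w!j \<in> set (drop k w))"
proof -
  have "set (drop k w) \<subseteq> set w" by (rule set_drop_subset)
  then show ?thesis using assms by (simp add: drop_map inj_on_image_mem_iff)
qed

lemma lastpos_map:
  assumes "inj_on f (set w)" shows "lastpos (map f w) = lastpos w"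
  unfolding lastpos_def using mem_drop_map[OF assms] by auto

lemma sinv_map:
  assumes "\<And>a b. a \<in> set w \<Longrightarrow> b \<in> set w \<Longrightarrow> f a < f b \<longleftrightarrow> a < b"
  shows "sinv (map f w) = sinv w"
proof -
  have inj: "inj_on f (set w)"
    by (rule inj_onI) (metis assms linorder_neq_iff)
  have e: "\<And>i j. (i < j \<and> j < length (map f w) \<and> map f w ! i > map f w ! j \<and>
       map f w ! j \<notin> set (drop (j + 1) (map f w))) =
     (i < j \<and> j < length w \<and> w ! i > w ! j \<and> w ! j \<notin> set (drop (j + 1) w))"
  proof -
    fix i j
    show "?thesis i j"
    proof (cases "i < j \<and> j < length w")
      case True
      then show ?thesis using mem_drop_map[OF inj, of j "j+1"] assms[of "w!i" "w!j"] assms[of "w!j" "w!i"] by auto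
    qed auto
  qed
  show ?thesis unfolding sinv_def by (simp only: e)
qed

lemma card_le_strict:
  assumes "finite S" "b \<in> S" "a < b"
  shows "card {x\<in>S. x \<le> (a::nat)} < card {x\<in>S. x \<le> b}"
proof (rule psubset_card_mono)
  show "finite {x\<in>S. x \<le> b}" using assms by auto
  have "b \<in> {x\<in>S. x \<le> b}" "b \<notin> {x\<in>S. x \<le> a}" using assms by auto
  moreover have "{x\<in>S. x \<le> a} \<subseteq> {x\<in>S. x \<le> b}" using assms by auto
  ultimately show "{x\<in>S. x \<le> a} \<subset> {x\<in>S. x \<le> b}" by blast
qed

lemma pack_nth: "i < length w \<Longrightarrow> pack w ! i = card {b\<in>set w. b \<le> w ! i}"
  by (simp add: pack_def)

lemma pack_map:
  assumes "\<And>a b. a \<in> set w \<Longrightarrow> b \<in> set w \<Longrightarrow> f a \<le> f b \<longleftrightarrow> a \<le> b"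
  shows "pack (map f w) = pack w"
proof -
  have inj: "inj_on f (set w)"
    by (rule inj_onI) (metis assms order_antisym order_refl)
  { fix a assume a: "a \<in> set w"
    have "{b \<in> f ` set w. b \<le> f a} = f ` {b\<in>set w. b \<le> a}" using assms a by auto
    then have "card {b \<in> f ` set w. b \<le> f a} = card {b\<in>set w. b \<le> a}"
      by (metis (no_types, lifting) card_image inj inj_on_subset mem_Collect_eq subsetI) }
  note h = this
  show ?thesis unfolding pack_def set_map map_map o_def
    by (rule map_cong) (simp_all add: h)
qed

lemma pack_packed: "packed v \<Longrightarrow> pack v = v"
proof -
  assume p: "packed v"
  { fix a assume "a \<in> set v"
    then have a: "a \<in> {1..card (set v)}" using p by (simp add: packed_def)
    obtain L where L: "set v = {1..L}" using p by (auto simp: packed_def)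
    have "{b\<in>set v. b \<le> a} = {1..a}" using a unfolding L by auto
    then have "card {b\<in>set v. b \<le> a} = a" using a by simp }
  then show ?thesis unfolding pack_def by (simp add: map_idI)
qed

lemma pack_strict: "i < length w \<Longrightarrow> j < length w \<Longrightarrow> w ! i < w ! j \<Longrightarrow> pack w ! i < pack w ! j"
  by (simp add: pack_nth card_le_strict)

lemma sorted_pack: "sorted (pack w) \<Longrightarrow> sorted w"
proof -
  assume s: "sorted (pack w)"
  have l: "length (pack w) = length w" by (simp add: pack_def)
  show ?thesis unfolding sorted_iff_nth_mono
  proof (intro allI impI)
    fix i j assume ij: "i \<le> j" "j < length w"
    show "w ! i \<le> w ! j"
    proof (rule ccontr)
      assume "\<not> w ! i \<le> w ! j"
      then have "pack w ! j < pack w ! i" using ij by (intro pack_strict) auto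
      moreover have "pack w ! i \<le> pack w ! j" using s ij l by (simp add: sorted_iff_nth_mono)
      ultimately show False by simp
    qed
  qed
qed



lemma card_nth_le:
  fixes s :: "nat list"
  assumes s: "sorted_wrt (<) s" and i: "i < length s"
  shows "card {b \<in> set s. b \<le> s ! i} = Suc (i::nat)"
proof -
  have mono: "\<And>j k. j < length s \<Longrightarrow> k < length s \<Longrightarrow> s ! j \<le> s ! k \<longleftrightarrow> j \<le> k"
  proof -
    fix j k assume jk: "j < length s" "k < length s"
    show "s ! j \<le> s ! k \<longleftrightarrow> j \<le> k"
    proof
      assume h: "s ! j \<le> s ! k"
      show "j \<le> k"
      proof (rule ccontr)
        assume "\<not> j \<le> k"
        then have "k < j" by simp
        then have "s ! k < s ! j" using sorted_wrt_nth_less[OF s _ jk(1)] by blast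
        then show False using h by simp
      qed
    next
      assume h: "j \<le> k"
      show "s ! j \<le> s ! k"
      proof (cases "j = k")
        case False
        then have "j < k" using h by simp
        then show ?thesis using sorted_wrt_nth_less[OF s _ jk(2)] by (simp add: less_imp_le)
      qed simp
    qed
  qed
  have "{b \<in> set s. b \<le> s ! i} = (\<lambda>j. s ! j) ` {..i}"
  proof
    show "{b \<in> set s. b \<le> s ! i} \<subseteq> (\<lambda>j. s ! j) ` {..i}"
    proof
      fix b assume "b \<in> {b \<in> set s. b \<le> s ! i}"
      then obtain j where j: "j < length s" "b = s ! j" "s ! j \<le> s ! i" by (auto simp: in_set_conv_nth)
      then have "j \<le> i" using mono[of j i] i by simp
      then show "b \<in> (\<lambda>j. s ! j) ` {..i}" using j by auto
    qed
    show "(\<lambda>j. s ! j) ` {..i} \<subseteq> {b \<in> set s. b \<le> s ! i}"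
    proof
      fix b assume "b \<in> (\<lambda>j. s ! j) ` {..i}"
      then obtain j where j: "j \<le> i" "b = s ! j" by auto
      then have "j < length s" using i by simp
      then show "b \<in> {b \<in> set s. b \<le> s ! i}" using j mono[of j i] i by simp
    qed
  qed
  moreover have "inj_on (\<lambda>j. s ! j) {..i}"
  proof (rule inj_onI)
    fix a b assume ab: "a \<in> {..i}" "b \<in> {..i}" "s ! a = s ! b"
    then have "a < length s" "b < length s" using i by auto
    then show "a = b" using mono[of a b] mono[of b a] ab(3) by simp
  qed
  ultimately show ?thesis by (simp add: card_image)
qed

lemma nth_image_all: "(\<lambda>j. xs ! j) ` {..<length xs} = set xs"
  by (auto simp: in_set_conv_nth)

definition rl :: "nat list \<Rightarrow> nat \<Rightarrow> nat" where
  "rl y k = sorted_list_of_set (set y) ! (k - 1)"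

lemma rl_mono:
  assumes "k \<in> {1..card (set y)}" "l \<in> {1..card (set y)}"
  shows "rl y k < rl y l \<longleftrightarrow> k < l"
proof -
  let ?s = "sorted_list_of_set (set y)"
  have s: "sorted_wrt (<) ?s" by (rule strict_sorted_list_of_set)
  have len: "length ?s = card (set y)" by simp
  show ?thesis unfolding rl_def
  proof
    assume h: "?s ! (k - 1) < ?s ! (l - 1)"
    show "k < l"
    proof (rule ccontr)
      assume "\<not> k < l"
      then have "l - 1 \<le> k - 1" by simp
      moreover have "k - 1 < length ?s" using assms len by auto
      ultimately have "?s ! (l - 1) \<le> ?s ! (k - 1)"
        using sorted_wrt_nth_less[OF s, of "l - 1" "k - 1"] by (cases "l - 1 = k - 1") auto
      then show False using h by simp
    qed
  next
    assume "k < l"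
    then have "k - 1 < l - 1" using assms by auto
    moreover have "l - 1 < length ?s" using assms len by auto
    ultimately show "?s ! (k - 1) < ?s ! (l - 1)" by (rule sorted_wrt_nth_less[OF s])
  qed
qed

lemma rl_mono_le:
  assumes "k \<in> {1..card (set y)}" "l \<in> {1..card (set y)}"
  shows "rl y k \<le> rl y l \<longleftrightarrow> k \<le> l"
  unfolding not_less[symmetric] using rl_mono[OF assms(2,1)] by simp

lemma rl_image: "rl y ` {1..card (set y)} = set y"
proof -
  let ?s = "sorted_list_of_set (set y)"
  have len: "length ?s = card (set y)" by simp
  have "rl y ` {1..card (set y)} = (\<lambda>j. ?s ! j) ` {..<length ?s}"
  proof
    show "rl y ` {1..card (set y)} \<subseteq> (\<lambda>j. ?s ! j) ` {..<length ?s}"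
    proof
      fix b assume "b \<in> rl y ` {1..card (set y)}"
      then obtain k where k: "k \<in> {1..card (set y)}" "b = rl y k" by blast
      then have "k - 1 \<in> {..<length ?s}" using len by auto
      moreover have "b = ?s ! (k - 1)" using k(2) by (simp add: rl_def)
      ultimately show "b \<in> (\<lambda>j. ?s ! j) ` {..<length ?s}" by blast
    qed
    show "(\<lambda>j. ?s ! j) ` {..<length ?s} \<subseteq> rl y ` {1..card (set y)}"
    proof
      fix b assume "b \<in> (\<lambda>j. ?s ! j) ` {..<length ?s}"
      then obtain j where "j < length ?s" "b = ?s ! j" by auto
      then show "b \<in> rl y ` {1..card (set y)}" unfolding rl_def len
        by (intro image_eqI[of _ _ "Suc j"]) auto
    qed
  qed
  also have "\<dots> = set ?s" by (rule nth_image_all)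
  finally show ?thesis by simp
qed

lemma rl_pack: "map (rl y) (pack y) = y"
proof (rule nth_equalityI)
  show "length (map (rl y) (pack y)) = length y" by (simp add: pack_def)
  fix i assume "i < length (map (rl y) (pack y))"
  then have i: "i < length y" by (simp add: pack_def)
  let ?s = "sorted_list_of_set (set y)"
  have s: "sorted_wrt (<) ?s" by (rule strict_sorted_list_of_set)
  have ss: "set ?s = set y" by simp
  have "y ! i \<in> set ?s" using i by simp
  then obtain k where k: "k < length ?s" "?s ! k = y ! i" by (metis in_set_conv_nth)
  have "pack y ! i = Suc k" using card_nth_le[OF s k(1)] k(2) i ss by (simp add: pack_nth)
  then show "map (rl y) (pack y) ! i = y ! i" using i k by (simp add: rl_def pack_def)
qed

lemma set_pack: "set (pack y) = {1..card (set y)}"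
proof -
  have sub: "set (pack y) \<subseteq> {1..card (set y)}"
  proof
    fix a assume "a \<in> set (pack y)"
    then obtain b where b: "b \<in> set y" "a = card {c \<in> set y. c \<le> b}" by (auto simp: pack_def)
    have "b \<in> {c \<in> set y. c \<le> b}" using b by auto
    then have "card {c \<in> set y. c \<le> b} \<noteq> 0" by (simp add: card_eq_0_iff) blast
    then have "card {c \<in> set y. c \<le> b} \<ge> 1" by linarith
    moreover have "card {c \<in> set y. c \<le> b} \<le> card (set y)" by (intro card_mono) auto
    ultimately show "a \<in> {1..card (set y)}" using b by auto
  qed
  have "set y = rl y ` set (pack y)" using arg_cong[OF rl_pack[of y], of set] by simp
  then have "card (set y) \<le> card (set (pack y))" using card_image_le[of "set (pack y)" "rl y"] by simp
  moreover have "card (set (pack y)) \<le> card {1..card (set y)}" by (rule card_mono[OF _ sub]) simp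
  ultimately have "card (set (pack y)) = card {1..card (set y)}" by simp
  then show ?thesis by (rule card_subset_eq[OF _ sub, rotated]) simp
qed



lemma drop_append_ge: "length x \<le> k \<Longrightarrow> drop k (x @ y) = drop (k - length x) y"
  by simp

lemma sinv_append:
  assumes sx: "sorted x"
  shows "sinv (x @ y) = sinv y + card (Sigma (lastpos y) (\<lambda>j. {i. i < length x \<and> x ! i > y ! j}))"
proof -
  let ?n = "length x"
  let ?A = "{(i, j). i < j \<and> j < length (x @ y) \<and> (x @ y) ! i > (x @ y) ! j \<and>
                 (x @ y) ! j \<notin> set (drop (j + 1) (x @ y))}"
  let ?B = "{(i, j). i < j \<and> j < length y \<and> y ! i > y ! j \<and> y ! j \<notin> set (drop (j + 1) y)}"
  let ?C = "Sigma (lastpos y) (\<lambda>j. {i. i < length x \<and> x ! i > y ! j})"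
  let ?f = "\<lambda>(j, i). (i, j + ?n)"
  let ?g = "\<lambda>(i, j). (i + ?n, j + ?n)"
  have eq: "?A = ?f ` ?C \<union> ?g ` ?B"
  proof
    show "?A \<subseteq> ?f ` ?C \<union> ?g ` ?B"
    proof
      fix p assume "p \<in> ?A"
      then obtain i j where p: "p = (i, j)" and ij: "i < j" "j < ?n + length y"
        and gt: "(x @ y) ! i > (x @ y) ! j" and nd: "(x @ y) ! j \<notin> set (drop (j + 1) (x @ y))"
        by auto
      have jn: "?n \<le> j"
      proof (rule ccontr)
        assume "\<not> ?n \<le> j"
        then have "(x @ y) ! i = x ! i" "(x @ y) ! j = x ! j" using ij by (auto simp: nth_append)
        moreover have "x ! i \<le> x ! j" using sx ij \<open>\<not> ?n \<le> j\<close> by (simp add: sorted_iff_nth_mono)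
        ultimately show False using gt by simp
      qed
      obtain j' where j': "j = j' + ?n" using jn by (metis le_add_diff_inverse2)
      have yj: "(x @ y) ! j = y ! j'" using j' by (simp add: nth_append)
      have dr: "drop (j + 1) (x @ y) = drop (Suc j') y" using j' by simp
      have lp: "j' \<in> lastpos y" using nd ij j' yj dr by (simp add: lastpos_def)
      show "p \<in> ?f ` ?C \<union> ?g ` ?B"
      proof (cases "i < ?n")
        case True
        then have "(j', i) \<in> ?C" using lp gt yj by (simp add: nth_append)
        then show ?thesis using p j' by force
      next
        case False
        then obtain i' where i': "i = i' + ?n" by (metis le_add_diff_inverse2 not_le)
        have "(i', j') \<in> ?B" using ij gt nd i' j' yj dr by (simp add: nth_append)
        then show ?thesis using p j' i' by force
      qed
    qed
    show "?f ` ?C \<union> ?g ` ?B \<subseteq> ?A"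
    proof
      fix p assume "p \<in> ?f ` ?C \<union> ?g ` ?B"
      then consider (c) j i where "p = (i, j + ?n)" "j \<in> lastpos y" "i < ?n" "x ! i > y ! j"
        | (b) i j where "p = (i + ?n, j + ?n)" "(i, j) \<in> ?B" by auto
      then show "p \<in> ?A"
      proof cases
        case c
        then show ?thesis by (auto simp: nth_append lastpos_def)
      next
        case b
        then show ?thesis by (auto simp: nth_append)
      qed
    qed
  qed
  have finC: "finite ?C" by (rule finite_SigmaI) (auto simp: lastpos_def)
  have finB: "finite ?B" by (rule finite_subset[of _ "{..<length y} \<times> {..<length y}"]) auto
  have injf: "inj_on ?f ?C" by (rule inj_onI) auto
  have injg: "inj_on ?g ?B" by (rule inj_onI) auto
  have disj: "?f ` ?C \<inter> ?g ` ?B = {}" by auto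
  have "card ?A = card ?C + card ?B"
    unfolding eq using finC finB injf injg disj
    by (simp add: card_Un_disjoint card_image)
  then show ?thesis unfolding sinv_def by simp
qed

lemma cross_sum:
  "card (Sigma (lastpos y) (\<lambda>j. {i. i < length x \<and> x ! i > y ! j}))
     = (\<Sum>b\<in>set y. card {i. i < length x \<and> x ! i > b})"
proof -
  have "card (Sigma (lastpos y) (\<lambda>j. {i. i < length x \<and> x ! i > y ! j}))
       = (\<Sum>j\<in>lastpos y. card {i. i < length x \<and> x ! i > y ! j})"
    by (rule card_SigmaI) (auto simp: lastpos_def)
  also have "\<dots> = (\<Sum>b\<in>set y. card {i. i < length x \<and> x ! i > b})"
    using sum.reindex_bij_betw[OF lastpos_bij, of "\<lambda>b. card {i. i < length x \<and> x ! i > b}"] .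
  finally show ?thesis .
qed

lemma lastpos_append_iff:
  "j \<in> lastpos (x @ y) \<longleftrightarrow> (j < length x \<and> x ! j \<notin> set (drop (Suc j) x) \<union> set y)
       \<or> (length x \<le> j \<and> j - length x \<in> lastpos y)"
proof (cases "j < length x")
  case True
  then show ?thesis by (auto simp: lastpos_def nth_append)
next
  case False
  then have "drop (Suc j) (x @ y) = drop (Suc (j - length x)) y" by (simp add: Suc_diff_le)
  moreover have "(x @ y) ! j = y ! (j - length x)" using False by (simp add: nth_append)
  ultimately show ?thesis using False by (auto simp: lastpos_def)
qed

lemma lastpos_append_cong:
  assumes "set y = set y'" "lastpos y = lastpos y'"
  shows "lastpos (x @ y) = lastpos (x @ y')"
  using assms by (auto simp: lastpos_append_iff)

lemma wc_des_lastpos: "wc_des w = {p. 1 \<le> p \<and> p < length w \<and> p - 1 \<in> lastpos w}"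
  unfolding wc_des_def lastpos_def by auto



lemma psum:
  assumes "sorted ps" "i < length ps"
  shows "sum_list (take (Suc i) (map2 (-) ps (0 # butlast ps))) = (ps ! i :: nat)"
  using assms(2)
proof (induction i)
  case 0
  then obtain a r where "ps = a # r" by (cases ps) auto
  then show ?case by simp
next
  case (Suc i)
  let ?d = "map2 (-) ps (0 # butlast ps)"
  have ld: "length ?d = length ps" using Suc.prems by auto
  have "take (Suc (Suc i)) ?d = take (Suc i) ?d @ [?d ! Suc i]"
    using Suc.prems ld by (simp add: take_Suc_conv_app_nth)
  moreover have "?d ! Suc i = ps ! Suc i - ps ! i"
    using Suc.prems by (simp add: nth_butlast)
  moreover have "ps ! i \<le> ps ! Suc i" using assms(1) Suc.prems by (simp add: sorted_iff_nth_mono)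
  ultimately show ?case using Suc by simp
qed

lemma diffs_inj:
  assumes "sorted ps" "sorted qs" "map2 (-) ps (0 # butlast ps) = map2 (-) qs (0 # butlast (qs::nat list))"
  shows "ps = qs"
proof -
  have l: "\<And>xs::nat list. length (map2 (-) xs (0 # butlast xs)) = length xs" by (case_tac xs) auto
  have "length (map2 (-) ps (0 # butlast ps)) = length (map2 (-) qs (0 # butlast qs))"
    using assms(3) by (rule arg_cong)
  then have len: "length ps = length qs" by (simp only: l)
  show ?thesis
  proof (rule nth_equalityI[OF len])
    fix i assume "i < length ps"
    then have "ps ! i = sum_list (take (Suc i) (map2 (-) ps (0 # butlast ps)))"
      using psum[OF assms(1), of i] by simp
    also have "\<dots> = sum_list (take (Suc i) (map2 (-) qs (0 # butlast qs)))" using assms(3) by simp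
    also have "\<dots> = qs ! i" using psum[OF assms(2), of i] len \<open>i < length ps\<close> by simp
    finally show "ps ! i = qs ! i" .
  qed
qed

lemma comp_sorted: "D \<subseteq> {1..<N::nat} \<Longrightarrow> sorted (sorted_list_of_set D @ [N])"
proof -
  assume a: "D \<subseteq> {1..<N}"
  then have "finite D" using finite_subset[OF a finite_atLeastLessThan] by blast
  then have "set (sorted_list_of_set D) = D" by simp
  then show ?thesis using a by (auto simp: sorted_append)
qed

lemma comp_inj:
  assumes "D \<subseteq> {1..<N}" "D' \<subseteq> {1..<N'}" "comp_of_set N D = comp_of_set N' D'"
  shows "N = N' \<and> D = D'"
proof (cases "N = 0 \<or> N' = 0")
  case True
  then show ?thesis using assms by (auto simp: comp_of_set_def Let_def split: if_splits)
next
  case False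
  then have "sorted_list_of_set D @ [N] = sorted_list_of_set D' @ [N']"
    using assms diffs_inj[OF comp_sorted[OF assms(1)] comp_sorted[OF assms(2)]]
    by (auto simp: comp_of_set_def Let_def)
  then have "N = N'" "sorted_list_of_set D = sorted_list_of_set D'" by auto
  moreover have "finite D" "finite D'" using finite_subset[OF assms(1) finite_atLeastLessThan] finite_subset[OF assms(2) finite_atLeastLessThan] by auto
  have "set (sorted_list_of_set D) = set (sorted_list_of_set D')"
    using \<open>sorted_list_of_set D = sorted_list_of_set D'\<close> by (rule arg_cong)
  with \<open>finite D\<close> \<open>finite D'\<close> \<open>N = N'\<close> show ?thesis by simp
qed

lemma WC_eq:
  assumes "WC v = WC v'" shows "length v = length v' \<and> wc_des v = wc_des v'"
proof -
  have "wc_des v \<subseteq> {1..<length v}" "wc_des v' \<subseteq> {1..<length v'}" by (auto simp: wc_des_def)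
  from comp_inj[OF this] assms show ?thesis unfolding WC_def by simp
qed

lemma lastpos_des: "lastpos w = {j. j < length w \<and> (Suc j = length w \<or> Suc j \<in> wc_des w)}"
  unfolding wc_des_lastpos by (auto simp: lastpos_def)

lemma WC_lastpos:
  assumes "length z = length z'" "lastpos z = lastpos z'" shows "WC z = WC z'"
  using assms unfolding WC_def wc_des_lastpos by simp



definition Tr :: "nat \<Rightarrow> nat list \<Rightarrow> nat list \<Rightarrow> nat list" where
  "Tr n v2 z = take n z @ map (rl (drop n z)) v2"

lemma packed_set: "set a = set b \<Longrightarrow> packed a = packed b"
  by (simp add: packed_def)

lemma transfer:
  assumes u: "sorted u" and p1: "packed v1" and p2: "packed v2"
    and len: "length v1 = length v2" and lp: "lastpos v1 = lastpos v2"
    and z: "z \<in> shuffle_set u v1"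
  shows "Tr (length u) v2 z \<in> shuffle_set u v2"
    and "WC (Tr (length u) v2 z) = WC z"
    and "sinv (Tr (length u) v2 z) + sinv v1 = sinv z + sinv v2"
    and "Tr (length u) v1 (Tr (length u) v2 z) = z"
proof -
  let ?n = "length u"
  define x where "x = take ?n z"
  define y where "y = drop ?n z"
  define y2 where "y2 = map (rl y) v2"
  have zs: "packed z" "length z = ?n + length v1" "pack x = u" "pack y = v1"
    using z by (auto simp: shuffle_set_def x_def y_def)
  have zxy: "z = x @ y" by (simp add: x_def y_def)
  have lx: "length x = ?n" using zs by (simp add: x_def)
  have ly: "length y = length v1" using zs by (simp add: y_def)
  have sx: "sorted x" using zs(3) u sorted_pack by simp
  define L where "L = card (set y)"
  have sv1: "set v1 = {1..L}" using set_pack[of y] zs(4) by (simp add: L_def)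
  have "card (set v2) = card (set v1)"
    using card_lastpos[of v1] card_lastpos[of v2] lp by simp
  then have cv2: "card (set v2) = L" using sv1 by simp
  have sv2: "set v2 = {1..L}" using p2 cv2 by (simp add: packed_def)
  have mono: "\<And>a b. a \<in> {1..L} \<Longrightarrow> b \<in> {1..L} \<Longrightarrow> rl y a < rl y b \<longleftrightarrow> a < b"
    using rl_mono L_def by blast
  have monole: "\<And>a b. a \<in> {1..L} \<Longrightarrow> b \<in> {1..L} \<Longrightarrow> rl y a \<le> rl y b \<longleftrightarrow> a \<le> b"
    using rl_mono_le L_def by blast
  have inj: "inj_on (rl y) {1..L}"
    by (rule inj_onI) (metis monole order_antisym order_refl)
  have yv1: "y = map (rl y) v1" using rl_pack[of y] zs(4) by simp
  have sety2: "set y2 = set y" using rl_image[of y] sv2 by (simp add: y2_def L_def)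
  have packy2: "pack y2 = v2"
    unfolding y2_def using pack_map[of v2 "rl y"] monole sv2 pack_packed[OF p2] by simp
  have lpy2: "lastpos y2 = lastpos v2" unfolding y2_def using lastpos_map inj sv2 by simp
  have lpy: "lastpos y = lastpos v1" using lastpos_map[of "rl y" v1] inj sv1 yv1 by simp
  have siy2: "sinv y2 = sinv v2" unfolding y2_def using sinv_map[of v2 "rl y"] mono sv2 by simp
  have siy: "sinv y = sinv v1" using sinv_map[of v1 "rl y"] mono sv1 yv1 by simp
  have Tz: "Tr ?n v2 z = x @ y2" by (simp add: Tr_def x_def y_def y2_def)
  show "Tr ?n v2 z \<in> shuffle_set u v2"
  proof -
    have "set (x @ y2) = set z" using sety2 zxy by simp
    then have "packed (x @ y2)" using zs(1) packed_set by blast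
    moreover have "length (x @ y2) = ?n + length v2" using lx by (simp add: y2_def)
    ultimately show ?thesis unfolding Tz shuffle_set_def using lx zs(3) packy2 by simp
  qed
  show "WC (Tr ?n v2 z) = WC z"
  proof -
    have "lastpos (x @ y2) = lastpos (x @ y)"
      by (rule lastpos_append_cong) (use sety2 lpy2 lpy lp in auto)
    moreover have "length (x @ y2) = length (x @ y)" using ly len by (simp add: y2_def)
    ultimately have "WC (Tr ?n v2 z) = WC (x @ y)" unfolding Tz using WC_lastpos by blast
    then show ?thesis by (simp only: zxy[symmetric])
  qed
  have "sinv (x @ y2) + sinv v1 = sinv (x @ y) + sinv v2"
    using sinv_append[OF sx, of y] sinv_append[OF sx, of y2] cross_sum[of y x]
      cross_sum[of y2 x] sety2 siy siy2 by simp
  then show "sinv (Tr ?n v2 z) + sinv v1 = sinv z + sinv v2" by (simp only: Tz zxy[symmetric])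
  show "Tr ?n v1 (Tr ?n v2 z) = z"
  proof -
    have "rl y2 = rl y" using sety2 by (simp add: rl_def fun_eq_iff)
    then show ?thesis unfolding Tz using lx yv1 zxy by (simp add: Tr_def)
  qed
qed



theorem mainTheorem18:
  fixes u v v' :: "nat list"
  assumes "packed u" and "sorted u"
    and "packed v" and "packed v'"
    and "WC v' = WC v"
  shows "(zeta (star_q u v) :: nat list \<Rightarrow> 'k::field_char_0 ratfun) = zeta (star_q u v')"
proof -
  from WC_eq[OF assms(5)] have l: "length v' = length v" "wc_des v' = wc_des v" by auto
  then have lp: "lastpos v' = lastpos v" by (simp add: lastpos_des)
  note t1 = transfer[OF assms(2) assms(3) assms(4) l(1)[symmetric] lp[symmetric]]
  note t2 = transfer[OF assms(2) assms(4) assms(3) l(1) lp]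
  show ?thesis
  proof (rule ext)
    fix c
    let ?P = "{z. packed z \<and> WC z = c}"
    let ?g = "\<lambda>w z. (qvar :: 'k ratfun) powi (int (sinv z) - int (sinv u) - int (sinv w))"
    show "(zeta (star_q u v) c :: 'k ratfun) = zeta (star_q u v') c"
    proof (cases "finite ?P")
      case False
      then show ?thesis by (simp add: zeta_def)
    next
      case True
      have e: "\<And>w. (zeta (star_q u w) c :: 'k ratfun) = (\<Sum>z\<in>?P \<inter> shuffle_set u w. ?g w z)"
        unfolding zeta_def star_q_def sum.inter_restrict[OF True] by simp
      have bij: "bij_betw (Tr (length u) v') (?P \<inter> shuffle_set u v) (?P \<inter> shuffle_set u v')"
      proof (rule bij_betw_byWitness[where f'="Tr (length u) v"])
        show "\<forall>a\<in>?P \<inter> shuffle_set u v. Tr (length u) v (Tr (length u) v' a) = a"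
          using t1(4) by blast
        show "\<forall>a\<in>?P \<inter> shuffle_set u v'. Tr (length u) v' (Tr (length u) v a) = a"
          using t2(4) by blast
        show "Tr (length u) v' ` (?P \<inter> shuffle_set u v) \<subseteq> ?P \<inter> shuffle_set u v'"
        proof
          fix z assume "z \<in> Tr (length u) v' ` (?P \<inter> shuffle_set u v)"
          then obtain a where a: "a \<in> ?P" "a \<in> shuffle_set u v" "z = Tr (length u) v' a" by auto
          have "z \<in> shuffle_set u v'" using t1(1)[OF a(2)] a(3) by simp
          moreover then have "packed z" by (simp add: shuffle_set_def)
          moreover have "WC z = c" using t1(2)[OF a(2)] a(1,3) by simp
          ultimately show "z \<in> ?P \<inter> shuffle_set u v'" by simp
        qed
        show "Tr (length u) v ` (?P \<inter> shuffle_set u v') \<subseteq> ?P \<inter> shuffle_set u v"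
        proof
          fix z assume "z \<in> Tr (length u) v ` (?P \<inter> shuffle_set u v')"
          then obtain a where a: "a \<in> ?P" "a \<in> shuffle_set u v'" "z = Tr (length u) v a" by auto
          have "z \<in> shuffle_set u v" using t2(1)[OF a(2)] a(3) by simp
          moreover then have "packed z" by (simp add: shuffle_set_def)
          moreover have "WC z = c" using t2(2)[OF a(2)] a(1,3) by simp
          ultimately show "z \<in> ?P \<inter> shuffle_set u v" by simp
        qed
      qed
      have "(zeta (star_q u v') c :: 'k ratfun) = (\<Sum>z\<in>?P \<inter> shuffle_set u v'. ?g v' z)" by (rule e)
      also have "\<dots> = (\<Sum>z\<in>?P \<inter> shuffle_set u v. ?g v' (Tr (length u) v' z))"
        by (rule sum.reindex_bij_betw[OF bij, symmetric])
      also have "\<dots> = (\<Sum>z\<in>?P \<inter> shuffle_set u v. ?g v z)"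
      proof (rule sum.cong)
        fix z assume "z \<in> ?P \<inter> shuffle_set u v"
        then have "sinv (Tr (length u) v' z) + sinv v = sinv z + sinv v'" using t1(3) by blast
        then have "int (sinv (Tr (length u) v' z)) - int (sinv u) - int (sinv v') =
            int (sinv z) - int (sinv u) - int (sinv v)" by linarith
        then show "?g v' (Tr (length u) v' z) = ?g v z" by (simp only:)
      qed simp
      also have "\<dots> = zeta (star_q u v) c" by (rule e[symmetric])
      finally show ?thesis by simp
    qed
  qed
qed

end
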